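(* Assume $\lfloor (M_1+\dots+M_n)/p\rfloor=n-1$ (ample reduction). For $l=1,\dots,n-1$ let $i(l)$ be the unique positive integer with $0\le\sum_{j=i(l)}^nM_j-lp<M_{i(l)}$. Then $i(l)=n-l$ for $l=1,\dots,n-1$.
   Context: $p,q$ are primes, $n$ a positive integer with $p>n\ge2$, $p>q$; $m_1,\dots,m_n$ are positive integers $<q$, and $M_i$ is the least positive integer with $M_i\equiv -m_iq^{-1}\pmod p$ (so $1\le M_i\le p-1$). *)

theory Defs
  imports "HOL-Number_Theory.Number_Theory"
begin

definition Mred :: "nat \<Rightarrow> nat \<Rightarrow> nat \<Rightarrow> nat" where
  "Mred p q m = (LEAST M::nat. 0 < M \<and> [int M * int q = - int m] (mod int p))"

end

theory Submission
  imports Defs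
begin

lemma Mred_bounds:
  assumes "prime p" "prime q" "q < p" "0 < m" "m < q"
  shows "0 < Mred p q m \<and> Mred p q m < p"
proof -
  have "coprime (int q) (int p)"
    using assms primes_coprime[of q p] by simp
  then obtain x where x: "[int q * x = 1] (mod int p)"
    using cong_solve_coprime_int by blast
  define M0 where "M0 = nat ((- int m * x) mod int p)"
  have pp: "int p > 0" using assms prime_gt_0_nat by simp
  have M0lt: "M0 < p" unfolding M0_def using pp
    by (simp add: nat_less_iff)
  have iM0: "int M0 = (- int m * x) mod int p" unfolding M0_def using pp by simp
  have c: "[int M0 * int q = - int m] (mod int p)"
  proof -
    have "[int M0 * int q = (- int m * x) * int q] (mod int p)"
      unfolding iM0 by (simp add: cong_def mod_mult_left_eq)
    moreover have "[(- int m * x) * int q = (- int m) * 1] (mod int p)"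
      using x by (metis cong_scalar_left mult.assoc mult.commute)
    ultimately show ?thesis by (simp add: cong_trans)
  qed
  have "M0 \<noteq> 0"
  proof
    assume "M0 = 0"
    with c have "[0 = - int m] (mod int p)" by simp
    hence "[- int m = 0] (mod int p)" by (rule cong_sym)
    hence "int p dvd - int m" by (simp only: cong_0_iff)
    hence "p dvd m" by simp
    with assms show False by (meson dvd_imp_le less_trans not_less)
  qed
  hence P: "0 < M0 \<and> [int M0 * int q = - int m] (mod int p)" using c by simp
  have "Mred p q m \<le> M0" unfolding Mred_def by (rule Least_le) (rule P)
  moreover have "0 < Mred p q m" unfolding Mred_def
    using LeastI[of "\<lambda>M. 0 < M \<and> [int M * int q = - int m] (mod int p)" M0, OF P] by blast
  ultimately show ?thesis using M0lt by simp
qed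

lemma aux_ineq:
  fixes L C P S :: int
  assumes "(L + C) * P \<le> C * (P - 1) + S" "C \<ge> 0"
  shows "L * P \<le> S"
  using assms by (simp add: algebra_simps)

theorem corollary6p4:
  fixes p q n :: nat and m :: "nat \<Rightarrow> nat"
  assumes "prime p" and "prime q" and "2 \<le> n" and "n < p" and "q < p"
    and "\<And>i. i \<in> {1..n} \<Longrightarrow> 0 < m i \<and> m i < q"
    and "(\<Sum>j=1..n. Mred p q (m j)) div p = n - 1"
  shows "\<forall>l \<in> {1..n-1}. \<forall>i \<in> {1..n}.
           (0 \<le> (\<Sum>j=i..n. int (Mred p q (m j))) - int l * int p \<and>
            (\<Sum>j=i..n. int (Mred p q (m j))) - int l * int p < int (Mred p q (m i)))
           \<longleftrightarrow> i = n - l"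
proof -
  define M where "M j = int (Mred p q (m j))" for j
  define S where "S i = (\<Sum>j=i..n. M j)" for i
  have Mb: "1 \<le> M j \<and> M j \<le> int p - 1" if "j \<in> {1..n}" for j
  proof -
    have "0 < Mred p q (m j) \<and> Mred p q (m j) < p"
      using Mred_bounds[OF assms(1,2,5)] assms(6)[OF that] by blast
    thus ?thesis unfolding M_def by linarith
  qed
  have Sstep: "S i = M i + S (Suc i)" if "i \<le> n" for i
    unfolding S_def using that by (simp add: sum.atLeast_Suc_atMost)
  have Smono: "S j \<le> S i" if "1 \<le> i" "i \<le> j" for i j
    unfolding S_def
    by (rule sum_mono2) (use that Mb in \<open>auto intro: order_trans[of 0 1]\<close>)
  have Stail: "S (n - l + 1) \<le> int l * (int p - 1)" if "l \<le> n" for l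
  proof -
    have "S (n - l + 1) \<le> of_nat (card {n-l+1..n}) * (int p - 1)"
      unfolding S_def by (rule sum_bounded_above) (use Mb in auto)
    also have "card {n-l+1..n} = l" using that by simp
    finally show ?thesis by simp
  qed
  have tot: "int (n - 1) * int p \<le> S 1"
  proof -
    have "(n - 1) * p \<le> (\<Sum>j=1..n. Mred p q (m j))"
    proof -
      have "(\<Sum>j=1..n. Mred p q (m j)) div p * p \<le> (\<Sum>j=1..n. Mred p q (m j))"
        by (rule div_times_less_eq_dividend)
      thus ?thesis unfolding assms(7) .
    qed
    hence "int ((n - 1) * p) \<le> int (\<Sum>j=1..n. Mred p q (m j))" by linarith
    thus ?thesis unfolding S_def M_def by simp
  qed
  show ?thesis
  proof (intro ballI)
    fix l i assume l: "l \<in> {1..n-1}" and i: "i \<in> {1..n}"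
    have split: "S 1 = (\<Sum>j=1..<n-l. M j) + S (n - l)"
    proof -
      have "{1..n} = {1..<n-l} \<union> {n-l..n}" using l by auto
      moreover have "{1..<n-l} \<inter> {n-l..n} = {}" by auto
      ultimately show ?thesis unfolding S_def by (simp add: sum.union_disjoint)
    qed
    have "(\<Sum>j=1..<n-l. M j) \<le> of_nat (card {1..<n-l}) * (int p - 1)"
      by (rule sum_bounded_above) (use Mb in auto)
    hence pre: "(\<Sum>j=1..<n-l. M j) \<le> int (n - l - 1) * (int p - 1)" by simp
    have hi: "int l * int p \<le> S (n - l)"
    proof -
      have "int (n - 1) * int p \<le> int (n - l - 1) * (int p - 1) + S (n - l)"
        using tot split pre by linarith
      moreover have "int (n - 1) = int l + int (n - l - 1)" using l by auto
      ultimately have "(int l + int (n - l - 1)) * int p \<le> int (n - l - 1) * (int p - 1) + S (n - l)"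
        by simp
      thus ?thesis by (rule aux_ineq) simp
    qed
    have lo: "S (n - l + 1) < int l * int p"
    proof -
      have "int l * (int p - 1) = int l * int p - int l" by (simp add: right_diff_distrib)
      moreover have "l \<le> n" "1 \<le> l" using l by auto
      ultimately show ?thesis using Stail[of l] by linarith
    qed
    have eq: "(\<Sum>j=i..n. int (Mred p q (m j))) = S i" unfolding S_def M_def by simp
    have Mi: "int (Mred p q (m i)) = M i" unfolding M_def by simp
    have cond: "(0 \<le> S i - int l * int p \<and> S i - int l * int p < M i) \<longleftrightarrow>
               (S (Suc i) < int l * int p \<and> int l * int p \<le> S i)"
      using Sstep[of i] i by auto
    have "(S (Suc i) < int l * int p \<and> int l * int p \<le> S i) \<longleftrightarrow> i = n - l"
    proof
      assume A: "S (Suc i) < int l * int p \<and> int l * int p \<le> S i"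
      show "i = n - l"
      proof (rule ccontr)
        assume "i \<noteq> n - l"
        hence "i < n - l \<or> i > n - l" by auto
        thus False
        proof
          assume "i < n - l"
          hence "S (n - l) \<le> S (Suc i)" using Smono[of "Suc i" "n - l"] by simp
          thus False using A hi by linarith
        next
          assume "i > n - l"
          hence "S i \<le> S (n - l + 1)" using Smono[of "n - l + 1" i] by simp
          thus False using A lo by linarith
        qed
      qed
    next
      assume "i = n - l"
      thus "S (Suc i) < int l * int p \<and> int l * int p \<le> S i" using hi lo by simp
    qed
    thus "(0 \<le> (\<Sum>j=i..n. int (Mred p q (m j))) - int l * int p \<and>
            (\<Sum>j=i..n. int (Mred p q (m j))) - int l * int p < int (Mred p q (m i)))
           \<longleftrightarrow> i = n - l" unfolding eq Mi using cond by simp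
  qed
qed

end
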